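(* If $R\le c/\delta$, then for every $n\ge 1$ we have $B^d_n+1\le B^s_n$, and the pair $\phi_{n+1}(x)=(a^s_{n+1}(x),a^d_n(x))$ satisfies, for $x\ge 0$: $\phi_{n+1}(x)=(l,1)$ if $0\le x\le B^d_n$; $\phi_{n+1}(x)=(l,0)$ if $B^d_n<x\le B^s_n$; $\phi_{n+1}(x)=(h,0)$ if $x>B^s_n$.
   Context: Parameters: $\lambda>0$, $0<\mu_l<\mu_h$, $\delta=\mu_h-\mu_l$, $R\ge 0$, $c>0$, and $h:\{0,1,2,\dots\}\to\mathbb{R}$ nondecreasing and convex with $h(0)=0$; the rates are normalized so that $\lambda+\mu_h+\beta=1$ for a discount rate $\beta>0$. Finite-horizon value functions on $S=\{0,1,2,\dots\}\times\{0,1\}$: $v_0\equiv 0$ and for $n\ge 0$: $v_{n+1}(0,0)=\lambda v_n(0,1)+\mu_h v_n(0,0)$; $v_{n+1}(x,0)=-h(x)+\lambda v_n(x,1)+\mu_l v_n(x-1,0)+\max\{\delta v_n(x,0),-c+\delta v_n(x-1,0)\}$ for $x\ge1$; $v_{n+1}(x,1)=\max\{R+v_{n+1}(x+1,0),v_{n+1}(x,0)\}$ for $x\ge 0$. Define $\Delta_n(x,i)=v_n(x,i)-v_n(x+1,i)$. Optimal decisions: admission in state $(x,1)$ with $n\ge1$ steps remaining: $a^d_{n}(x)=1$ if $\Delta_{n}(x,0)\le R$, else $0$; service rate in state $(x,0)$ with $n+1$ steps remaining: $a^s_{n+1}(0)=l$, and for $x>0$, $a^s_{n+1}(x)=l$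 if $\Delta_n(x-1,0)\le c/\delta$, else $h$. Threshold function: $T_f(\theta)=\sup\{k\ge0: f(k)\le\theta\}$ with $\sup\emptyset=-1$ ($+\infty$ allowed). Thresholds: $B^s_n=1+T_{\Delta_n(\cdot,0)}(c/\delta)$ and $B^d_n=T_{\Delta_n(\cdot,0)}(R)$. *)

theory Defs
  imports Complex_Main "HOL-Library.Extended_Real"
begin

text \<open>Parameters: lam (arrival rate), mul, muh (service rates),
  c (cost of high rate), R (admission reward), h (holding cost).
  vs0 n x = v_n(x,0), vs1 n x = v_n(x,1). delta = muh - mul.\<close>

primrec vs0 :: "real \<Rightarrow> real \<Rightarrow> real \<Rightarrow> real \<Rightarrow> real \<Rightarrow> (nat \<Rightarrow> real) \<Rightarrow> nat \<Rightarrow> nat \<Rightarrow> real" where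
  "vs0 lam mul muh c R h 0 x = 0"
| "vs0 lam mul muh c R h (Suc n) x =
     (let w = vs0 lam mul muh c R h n;
          u = (\<lambda>y. if n = 0 then 0 else max (R + w (Suc y)) (w y))
      in if x = 0 then lam * u 0 + muh * w 0
         else - h x + lam * u x + mul * w (x - 1)
              + max ((muh - mul) * w x) (- c + (muh - mul) * w (x - 1)))"

definition vs1 :: "real \<Rightarrow> real \<Rightarrow> real \<Rightarrow> real \<Rightarrow> real \<Rightarrow> (nat \<Rightarrow> real) \<Rightarrow> nat \<Rightarrow> nat \<Rightarrow> real" where
  "vs1 lam mul muh c R h n x =
     (if n = 0 then 0
      else max (R + vs0 lam mul muh c R h n (Suc x)) (vs0 lam mul muh c R h n x))"

definition Dlt0 :: "real \<Rightarrow> real \<Rightarrow> real \<Rightarrow> real \<Rightarrow> real \<Rightarrow> (nat \<Rightarrow> real) \<Rightarrow> nat \<Rightarrow> nat \<Rightarrow> real" where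
  "Dlt0 lam mul muh c R h n x = vs0 lam mul muh c R h n x - vs0 lam mul muh c R h n (Suc x)"

definition Thr :: "(nat \<Rightarrow> real) \<Rightarrow> real \<Rightarrow> ereal" where
  "Thr f \<theta> = (if {k. f k \<le> \<theta>} = {} then -1 else Sup ((\<lambda>k. ereal (real k)) ` {k. f k \<le> \<theta>}))"

definition Bs :: "real \<Rightarrow> real \<Rightarrow> real \<Rightarrow> real \<Rightarrow> real \<Rightarrow> (nat \<Rightarrow> real) \<Rightarrow> nat \<Rightarrow> ereal" where
  "Bs lam mul muh c R h n = 1 + Thr (Dlt0 lam mul muh c R h n) (c / (muh - mul))"

definition Bd :: "real \<Rightarrow> real \<Rightarrow> real \<Rightarrow> real \<Rightarrow> real \<Rightarrow> (nat \<Rightarrow> real) \<Rightarrow> nat \<Rightarrow> ereal" where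
  "Bd lam mul muh c R h n = Thr (Dlt0 lam mul muh c R h n) R"

datatype rate = Low | High

text \<open>Admission decision a^d_n(x) (1 = admit, 0 = reject), for n >= 1 steps remaining.\<close>
definition adm :: "real \<Rightarrow> real \<Rightarrow> real \<Rightarrow> real \<Rightarrow> real \<Rightarrow> (nat \<Rightarrow> real) \<Rightarrow> nat \<Rightarrow> nat \<Rightarrow> nat" where
  "adm lam mul muh c R h n x = (if Dlt0 lam mul muh c R h n x \<le> R then 1 else 0)"

text \<open>Service-rate decision a^s_{n+1}(x) with n+1 steps remaining.\<close>
definition srv :: "real \<Rightarrow> real \<Rightarrow> real \<Rightarrow> real \<Rightarrow> real \<Rightarrow> (nat \<Rightarrow> real) \<Rightarrow> nat \<Rightarrow> nat \<Rightarrow> rate" where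
  "srv lam mul muh c R h n x =
     (if x = 0 then Low
      else if Dlt0 lam mul muh c R h n (x - 1) \<le> c / (muh - mul) then Low else High)"

end

theory Submission
  imports Defs
begin

lemma Thr_ne: "{k. f k \<le> t} \<noteq> {} \<Longrightarrow> Thr f t = Sup ((\<lambda>k. ereal (real k)) ` {k. f k \<le> t})"
  unfolding Thr_def by (rule if_not_P)

lemma Thr_e: "{k. f k \<le> t} = {} \<Longrightarrow> Thr f t = -1"
  unfolding Thr_def by (rule if_P)

lemma Thr_ge: "Thr f t \<ge> -1"
proof (cases "{k. f k \<le> t} = {}")
  case True thus ?thesis by (simp add: Thr_def)
next
  case False
  then obtain k where k: "f k \<le> t" by auto
  have "ereal (real k) \<le> Sup ((\<lambda>k. ereal (real k)) ` {k. f k \<le> t})"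
    by (rule Sup_upper) (use k in auto)
  moreover have "-1 \<le> ereal (real k)" by (rule order_trans[of _ 0]) auto
  ultimately show ?thesis using Thr_ne[OF False] by simp
qed

lemma Thr_mono: "t1 \<le> t2 \<Longrightarrow> Thr f t1 \<le> Thr f t2"
proof (cases "{k. f k \<le> t1} = {}")
  case True thus ?thesis using Thr_ge[of f t2] by (simp add: Thr_def)
next
  case False
  assume le: "t1 \<le> t2"
  hence sub: "{k. f k \<le> t1} \<subseteq> {k. f k \<le> t2}" by auto
  with False have ne: "{k. f k \<le> t2} \<noteq> {}" by auto
  have "Sup ((\<lambda>k. ereal (real k)) ` {k. f k \<le> t1}) \<le> Sup ((\<lambda>k. ereal (real k)) ` {k. f k \<le> t2})"
    by (rule Sup_subset_mono) (use sub in auto)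
  thus ?thesis using Thr_ne[OF False] Thr_ne[OF ne] by simp
qed

lemma Thr_gt: "ereal (real x) > Thr f t \<Longrightarrow> f x > t"
proof (rule ccontr)
  assume a: "ereal (real x) > Thr f t" and "\<not> f x > t"
  hence fx: "f x \<le> t" by simp
  hence ne: "{k. f k \<le> t} \<noteq> {}" by auto
  have "ereal (real x) \<le> Sup ((\<lambda>k. ereal (real k)) ` {k. f k \<le> t})"
    by (rule Sup_upper) (use fx in auto)
  thus False using a Thr_ne[OF ne] by simp
qed

lemma Thr_le:
  assumes mono: "\<And>k. f k \<le> f (Suc k)" and le: "ereal (real x) \<le> Thr f t"
  shows "f x \<le> t"
proof (rule ccontr)
  assume "\<not> f x \<le> t"
  hence fx: "f x > t" by simp
  have mono': "f a \<le> f b" if "a \<le> b" for a b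
    using that by (induction rule: dec_induct) (auto intro: order_trans mono)
  show False
  proof (cases "{k. f k \<le> t} = {}")
    case True
    have "ereal (real x) \<le> -1" using le Thr_e[OF True] by simp
    moreover have "(-1::ereal) < ereal (real x)" by (rule less_le_trans[of _ 0]) auto
    ultimately show False by simp
  next
    case False
    have "Sup ((\<lambda>k. ereal (real k)) ` {k. f k \<le> t}) \<le> ereal (real x - 1)"
    proof (rule Sup_least)
      fix y assume "y \<in> (\<lambda>k. ereal (real k)) ` {k. f k \<le> t}"
      then obtain k where k: "f k \<le> t" "y = ereal (real k)" by auto
      have "k < x"
      proof (rule ccontr)
        assume "\<not> k < x" hence "x \<le> k" by simp
        hence "f x \<le> f k" by (rule mono')
        with k fx show False by simp
      qed
      thus "y \<le> ereal (real x - 1)" using k by simp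
    qed
    moreover have "ereal (real x) \<le> Sup ((\<lambda>k. ereal (real k)) ` {k. f k \<le> t})"
      using le Thr_ne[OF False] by simp
    ultimately have "ereal (real x) \<le> ereal (real x - 1)" by (rule order_trans[rotated])
    thus False by simp
  qed
qed

context
  fixes lam mul muh c R :: real and h :: "nat \<Rightarrow> real"
  assumes pos: "0 < mul" "mul < muh" "R \<ge> 0" "c > 0" "lam > 0"
    and hmono: "mono h" and hconv: "\<And>x. h (Suc x) - h x \<le> h (Suc (Suc x)) - h (Suc x)"
    and h0: "h 0 = 0"
begin

lemma D_props: "\<forall>x. 0 \<le> Dlt0 lam mul muh c R h n x \<and> Dlt0 lam mul muh c R h n x \<le> Dlt0 lam mul muh c R h n (Suc x)"
proof (induction n)
  case 0 show ?case by (simp add: Dlt0_def)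
next
  case (Suc n)
  define w where "w = vs0 lam mul muh c R h n"
  define d where "d x = w x - w (Suc x)" for x
  have d0: "\<And>x. 0 \<le> d x" and dm: "\<And>x. d x \<le> d (Suc x)"
    using Suc.IH by (auto simp: d_def w_def Dlt0_def)
  define \<delta> where "\<delta> = muh - mul"
  have dpos: "\<delta> > 0" using pos by (simp add: \<delta>_def)
  define U where "U y = (if n = 0 then 0 else max (R + w (Suc y)) (w y))" for y
  define du where "du y = (if n = 0 then 0 else min (d (Suc y)) (max (d y) R))" for y
  define dmm where "dmm x = (if x = 0 then 0 else d (x - 1))" for x
  have hU: "U y - U (Suc y) = du y" for y
  proof (cases "n = 0")
    case True thus ?thesis by (simp add: U_def du_def)
  next
    case False
    have "d y \<le> d (Suc y)" by (rule dm)
    thus ?thesis using False unfolding U_def du_def d_def by (simp add: max_def min_def)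
  qed
  have V: "vs0 lam mul muh c R h (Suc n) x = (if x = 0 then lam * U 0 + muh * w 0
      else - h x + lam * U x + mul * w (x - 1) + max (\<delta> * w x) (- c + \<delta> * w (x - 1)))" for x
    by (simp add: w_def U_def \<delta>_def Let_def)
  have e: "\<delta> * w x - \<delta> * w (Suc x) = \<delta> * d x" for x by (simp add: d_def algebra_simps)
  have e0: "\<delta> * d x \<ge> 0" for x using d0[of x] dpos by simp
  have em: "\<delta> * d x \<le> \<delta> * d (Suc x)" for x using dm[of x] dpos by simp
  have key: "Dlt0 lam mul muh c R h (Suc n) x = (h (Suc x) - h x) + lam * du x + mul * dmm x
      + max (\<delta> * dmm x) (min (\<delta> * d x) c)" for x
  proof (cases x)
    case 0
    have m: "muh * w 0 = mul * w 0 + \<delta> * w 0" by (simp add: \<delta>_def algebra_simps)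
    have l: "lam * U 0 - lam * U 1 = lam * du 0" using hU[of 0] by (simp add: algebra_simps)
    show ?thesis using 0 m l e[of 0] e0[of 0] h0 pos unfolding Dlt0_def V dmm_def
      by (simp add: max_def min_def)
  next
    case (Suc y)
    have l: "lam * U (Suc y) - lam * U (Suc (Suc y)) = lam * du (Suc y)" using hU[of "Suc y"] by (simp add: algebra_simps)
    have mm: "mul * w y - mul * w (Suc y) = mul * d y" by (simp add: d_def algebra_simps)
    show ?thesis using Suc l mm e[of y] e[of "Suc y"] em[of y] unfolding Dlt0_def V dmm_def
      by (simp add: max_def min_def)
  qed
  have hd0: "h (Suc x) - h x \<ge> 0" for x using hmono by (simp add: mono_def)
  have du0: "du x \<ge> 0" for x using d0[of x] d0[of "Suc x"] pos by (simp add: du_def max_def)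
  have dumono: "du x \<le> du (Suc x)" for x
    using dm[of x] dm[of "Suc x"] by (simp add: du_def min_def max_def)
  have dmm0: "dmm x \<ge> 0" for x using d0 by (simp add: dmm_def)
  have dmmmono: "dmm x \<le> dmm (Suc x)" for x
    using d0 dm by (cases x) (auto simp: dmm_def)
  have lm: "lam * du x \<le> lam * du (Suc x)" for x using dumono[of x] pos by (simp add: mult_left_mono)
  have mmm: "mul * dmm x \<le> mul * dmm (Suc x)" for x using dmmmono[of x] pos by (simp add: mult_left_mono)
  have dd: "\<delta> * dmm x \<le> \<delta> * dmm (Suc x)" for x using dmmmono[of x] dpos by (simp add: mult_left_mono)
  have l0: "lam * du x \<ge> 0" for x using du0[of x] pos by simp
  have m0: "mul * dmm x \<ge> 0" for x using dmm0[of x] pos by simp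
  have dd0: "\<delta> * dmm x \<ge> 0" for x using dmm0[of x] dpos by simp
  show ?case
  proof
    fix x
    show "0 \<le> Dlt0 lam mul muh c R h (Suc n) x \<and> Dlt0 lam mul muh c R h (Suc n) x \<le> Dlt0 lam mul muh c R h (Suc n) (Suc x)"
      unfolding key using hd0[of x] hconv[of x] lm[of x] mmm[of x] dd[of x] em[of x] l0[of x] m0[of x] dd0[of x]
      by (simp add: max_def min_def)
  qed
qed

end

theorem proposition1:
  fixes lam mul muh \<beta> c R :: real and h :: "nat \<Rightarrow> real"
  assumes "lam > 0" and "0 < mul" and "mul < muh" and "R \<ge> 0" and "c > 0"
    and "\<beta> > 0" and "lam + muh + \<beta> = 1"
    and "mono h" and "\<And>x. h (Suc x) - h x \<le> h (Suc (Suc x)) - h (Suc x)" and "h 0 = 0"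
    and "R \<le> c / (muh - mul)"
  shows "\<forall>n\<ge>1.
     Bd lam mul muh c R h n + 1 \<le> Bs lam mul muh c R h n \<and>
     (\<forall>x::nat.
        (ereal (real x) \<le> Bd lam mul muh c R h n \<longrightarrow>
           (srv lam mul muh c R h n x, adm lam mul muh c R h n x) = (Low, 1)) \<and>
        (Bd lam mul muh c R h n < ereal (real x) \<and> ereal (real x) \<le> Bs lam mul muh c R h n \<longrightarrow>
           (srv lam mul muh c R h n x, adm lam mul muh c R h n x) = (Low, 0)) \<and>
        (ereal (real x) > Bs lam mul muh c R h n \<longrightarrow>
           (srv lam mul muh c R h n x, adm lam mul muh c R h n x) = (High, 0)))"
proof (intro allI impI)
  fix n :: nat assume "n \<ge> 1"
  define D where "D = Dlt0 lam mul muh c R h n"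
  have DP: "\<forall>x. 0 \<le> D x \<and> D x \<le> D (Suc x)"
    unfolding D_def by (rule D_props) (use assms in auto)
  hence Dm: "\<And>k. D k \<le> D (Suc k)" by auto
  define T1 where "T1 = Thr D (c / (muh - mul))"
  define T2 where "T2 = Thr D R"
  have Bs: "Bs lam mul muh c R h n = 1 + T1" by (simp add: Bs_def T1_def D_def)
  have Bd: "Bd lam mul muh c R h n = T2" by (simp add: Bd_def T2_def D_def)
  have T12: "T2 \<le> T1" unfolding T1_def T2_def by (rule Thr_mono) (use assms in simp)
  have T1ge: "T1 \<ge> -1" unfolding T1_def by (rule Thr_ge)
  have adm: "adm lam mul muh c R h n x = (if D x \<le> R then 1 else 0)" for x
    by (simp add: adm_def D_def)
  have srv: "srv lam mul muh c R h n x = (if x = 0 then Low else if D (x - 1) \<le> c / (muh - mul) then Low else High)" for x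
    by (simp add: srv_def D_def)
  have Dprev: "D (x - 1) \<le> D x" if "x \<noteq> 0" for x using Dm[of "x - 1"] that by simp
  have P1: "Bd lam mul muh c R h n + 1 \<le> Bs lam mul muh c R h n"
    unfolding Bs Bd using add_left_mono[OF T12, of 1] by (simp add: add.commute)
  have P2: "\<forall>x::nat. (ereal (real x) \<le> Bd lam mul muh c R h n \<longrightarrow>
           (srv lam mul muh c R h n x, adm lam mul muh c R h n x) = (Low, 1)) \<and>
        (Bd lam mul muh c R h n < ereal (real x) \<and> ereal (real x) \<le> Bs lam mul muh c R h n \<longrightarrow>
           (srv lam mul muh c R h n x, adm lam mul muh c R h n x) = (Low, 0)) \<and>
        (ereal (real x) > Bs lam mul muh c R h n \<longrightarrow>
           (srv lam mul muh c R h n x, adm lam mul muh c R h n x) = (High, 0))"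
  proof
    fix x :: nat
  show "(ereal (real x) \<le> Bd lam mul muh c R h n \<longrightarrow>
           (srv lam mul muh c R h n x, adm lam mul muh c R h n x) = (Low, 1)) \<and>
        (Bd lam mul muh c R h n < ereal (real x) \<and> ereal (real x) \<le> Bs lam mul muh c R h n \<longrightarrow>
           (srv lam mul muh c R h n x, adm lam mul muh c R h n x) = (Low, 0)) \<and>
        (ereal (real x) > Bs lam mul muh c R h n \<longrightarrow>
           (srv lam mul muh c R h n x, adm lam mul muh c R h n x) = (High, 0))"
    unfolding Bs Bd
  proof (intro conjI impI)
    assume a: "ereal (real x) \<le> T2"
    have "D x \<le> R" using Thr_le[OF Dm a[unfolded T2_def]] .
    moreover have "x \<noteq> 0 \<Longrightarrow> D (x - 1) \<le> c / (muh - mul)"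
      using Dprev[of x] calculation assms(11) by linarith
    ultimately show "(srv lam mul muh c R h n x, adm lam mul muh c R h n x) = (Low, 1)"
      by (simp add: srv adm)
  next
    assume a: "T2 < ereal (real x) \<and> ereal (real x) \<le> 1 + T1"
    have "D x > R" using Thr_gt[of D R x] a by (simp add: T2_def)
    moreover have "D (x - 1) \<le> c / (muh - mul)" if "x \<noteq> 0"
    proof -
      have "ereal (real (x - 1)) \<le> T1"
        using a that T1ge by (cases T1) (auto simp: of_nat_diff one_ereal_def)
      thus ?thesis using Thr_le[of D, OF Dm] by (simp add: T1_def)
    qed
    ultimately show "(srv lam mul muh c R h n x, adm lam mul muh c R h n x) = (Low, 0)"
      by (auto simp: srv adm)
  next
    assume a: "1 + T1 < ereal (real x)"
    have x0: "x \<noteq> 0" using a T1ge by (cases T1) (auto simp: one_ereal_def)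
    have "ereal (real (x - 1)) > T1"
      using a x0 T1ge by (cases T1) (auto simp: of_nat_diff one_ereal_def)
    hence g: "D (x - 1) > c / (muh - mul)" using Thr_gt[of D] by (simp add: T1_def)
    hence "D x > R" using Dprev[OF x0] assms(11) by linarith
    thus "(srv lam mul muh c R h n x, adm lam mul muh c R h n x) = (High, 0)"
      using g x0 by (simp add: srv adm)
  qed
  qed
  show "Bd lam mul muh c R h n + 1 \<le> Bs lam mul muh c R h n \<and> (\<forall>x::nat. (ereal (real x) \<le> Bd lam mul muh c R h n \<longrightarrow>
           (srv lam mul muh c R h n x, adm lam mul muh c R h n x) = (Low, 1)) \<and>
        (Bd lam mul muh c R h n < ereal (real x) \<and> ereal (real x) \<le> Bs lam mul muh c R h n \<longrightarrow>
           (srv lam mul muh c R h n x, adm lam mul muh c R h n x) = (Low, 0)) \<and>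
        (ereal (real x) > Bs lam mul muh c R h n \<longrightarrow>
           (srv lam mul muh c R h n x, adm lam mul muh c R h n x) = (High, 0)))"
    using P1 P2 by blast
qed

end
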